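(* Let $r\ge1$, let $\mathbf s=(s_1,\dots,s_r)$ be a composition with $s_1>1$, and let $\xi=(\xi_1,\dots,\xi_r)\in\mathbb{C}^r$ and $\mathbf t=(t_1,\dots,t_r)$ satisfy condition (E). Then $\mathrm{Di}(\mathbf F_{\xi,\mathbf t};\mathbf s)=\alpha_0^1\big(x_0^{s_1-1}x_{1,\xi,\bar t_1}\,x_0^{s_2-1}x_{2,\xi,\bar t_2}\cdots x_0^{s_r-1}x_{r,\xi,\bar t_r}\big)$.
   Context: Colored Hurwitz polyzetas. For a composition $\mathbf s=(s_1,\dots,s_r)$ (positive integers), $\xi=(\xi_1,\dots,\xi_r)\in\mathbb{C}^r$ and real $\mathbf t=(t_1,\dots,t_r)$, set $\mathrm{Di}(\mathbf F_{\xi,\mathbf t};\mathbf s)=\sum_{n_1>\cdots>n_r>0}\frac{\xi_1^{n_1}\cdots\xi_r^{n_r}}{(n_1-t_1)^{s_1}\cdots(n_r-t_r)^{s_r}}$. Condition (E): for all $i$, $|\xi_1\xi_2\cdots\xi_i|\le 1$ and $t_i\in\,]-\infty,1[$. Differences of parameters. $\bar t_i=t_i-t_{i+1}$ for $1\le i<r$, and $\bar t_r=t_r$; thus $t_i=\bar t_i+\cdots+\bar t_r$. Letters and forms. The alphabet consists of $x_0$ and letters $x_{i,\xi,\tau}$ with $i\ge1$, $\xi$ a sequence of complex numbers and $\tau$ a real parameter. The associated differential forms are $\omega_0(z)=\frac{dz}{z}$ and $\omega_{i,\xi,\tau}(z)=\frac{\xi_1\cdots\xi_i}{1-\xi_1\cdots\xi_i\,z}\,\frac{dz}{z^{\tau}}$.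 Iterated integrals. For a word $w=y_1y_2\cdots y_k$ with associated forms $\omega^{(1)},\dots,\omega^{(k)}$, the Chen iterated integral along $[0,z]$ is defined recursively by $\alpha_0^z(1)=1$ and $\alpha_0^z(y_1y_2\cdots y_k)=\int_0^z\omega^{(1)}(z_1)\,\alpha_0^{z_1}(y_2\cdots y_k)$. *)

theory Defs
  imports "HOL-Analysis.Analysis"
begin

text \<open>Lists are 0-indexed: s!0 = s_1, xi!0 = xi_1, t!0 = t_1.\<close>

definition Di :: "complex list \<Rightarrow> real list \<Rightarrow> nat list \<Rightarrow> complex" where
  "Di xi t s = infsum
     (\<lambda>ns. \<Prod>i<length s. xi!i ^ (ns!i) / (complex_of_real (real (ns!i) - t!i)) ^ (s!i))
     {ns :: nat list. length ns = length s \<and> sorted_wrt (>) ns \<and> (\<forall>n\<in>set ns. 0 < n)}"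

definition condE :: "complex list \<Rightarrow> real list \<Rightarrow> bool" where
  "condE xi t \<longleftrightarrow> (\<forall>i\<in>{1..length xi}. norm (prod_list (take i xi)) \<le> 1 \<and> t!(i-1) < 1)"

definition tbar :: "real list \<Rightarrow> nat \<Rightarrow> real" where
  "tbar t i = (if Suc i < length t then t!i - t!(Suc i) else t!i)"

datatype letter = X0 | XL nat "complex list" real

fun omega :: "letter \<Rightarrow> real \<Rightarrow> complex" where
  "omega X0 z = complex_of_real (1 / z)"
| "omega (XL i xi \<tau>) z =
     prod_list (take i xi) / (1 - prod_list (take i xi) * complex_of_real z)
     * complex_of_real (1 / z powr \<tau>)"

primrec alpha0 :: "letter list \<Rightarrow> real \<Rightarrow> complex" where
  "alpha0 [] z = 1"
| "alpha0 (y # w) z = (LINT u:{0<..<z}|lborel. omega y u * alpha0 w u)"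

definition colored_word :: "nat list \<Rightarrow> complex list \<Rightarrow> real list \<Rightarrow> letter list" where
  "colored_word s xi t =
     concat (map (\<lambda>i. replicate (s!i - 1) X0 @ [XL (Suc i) xi (tbar t i)]) [0..<length s])"

end

theory Submission
  imports Defs "HOL-Real_Asymp.Real_Asymp"
begin

lemma powr_int:
  fixes e u :: real assumes e: "e > -1" and u: "u > 0"
  shows "set_integrable lborel {0<..<u} (\<lambda>v. v powr e)"
    "(LINT v:{0<..<u}|lborel. v powr e) = u powr (e+1)/(e+1)"
proof -
  define F where "F = (\<lambda>x::real. x powr (e+1)/(e+1))"
  have D: "DERIV F x :> x powr e" if "0 < x" for x
  proof -
    have "DERIV (\<lambda>x. x powr (e+1)) x :> (e+1) * x powr (e+1-1)"
      using that by (rule has_real_derivative_powr)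
    then have "DERIV F x :> (e+1) * x powr (e+1-1) / (e+1)"
      unfolding F_def by (rule DERIV_cdivide)
    then show ?thesis using e by simp
  qed
  have A: "(F \<longlongrightarrow> 0) (at_right 0)"
  proof -
    have "((\<lambda>x::real. x powr (e+1)) \<longlongrightarrow> 0) (at_right 0)"
      using e by real_asymp
    then show ?thesis unfolding F_def by (rule tendsto_divide_zero)
  qed
  have B: "(F \<longlongrightarrow> F u) (at_left u)"
    unfolding F_def using u e by (intro tendsto_intros) auto
  have *: "set_integrable lborel (einterval (ereal 0) (ereal u)) (\<lambda>v. v powr e)"
       "(LBINT x=ereal 0..ereal u. x powr e) = F u - 0"
    by (rule interval_integral_FTC_nonneg[where F=F and A=0 and B="F u"];
        use u D A B in \<open>auto simp: ereal_tendsto_simps1 intro!: continuous_intros\<close>)+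
  show "set_integrable lborel {0<..<u} (\<lambda>v. v powr e)" using *(1) by simp
  show "(LINT v:{0<..<u}|lborel. v powr e) = u powr (e+1)/(e+1)"
    using *(2) u by (simp add: interval_lebesgue_integral_def F_def)
qed

lemma powr_int':
  fixes e u :: real assumes e: "e > -1" and u: "u > 0"
  shows "integrable lborel (\<lambda>v. indicator {0<..<u} v * v powr e)"
    "(\<integral>v. indicator {0<..<u} v * v powr e \<partial>lborel) = u powr (e+1)/(e+1)"
  using powr_int[OF e u] by (simp_all add: set_integrable_def set_lebesgue_integral_def)

lemma ILem:
  fixes c :: "nat \<Rightarrow> complex" and t u :: real
  assumes c0: "c 0 = 0" and t: "t < 1" and u: "0 < u"
    and sumu: "summable (\<lambda>n. norm (c n) * u ^ n / (real n - t))"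
    and sumv: "\<And>v. 0 < v \<Longrightarrow> v < u \<Longrightarrow> summable (\<lambda>n. norm (c n) * v ^ n)"
  shows "(LINT v:{0<..<u}|lborel. complex_of_real (v powr (-1-t)) * (\<Sum>n. c n * complex_of_real v ^ n))
     = complex_of_real (u powr (-t)) * (\<Sum>n. c n * complex_of_real u ^ n / complex_of_real (real n - t))"
proof -
  define g where "g n v = indicator {0<..<u} v * v powr (real n - 1 - t)" for n v
  define f where "f n v = c n * complex_of_real (g n v)" for n v
  have gint: "integrable lborel (g n) \<and> integral\<^sup>L lborel (g n) = u powr (real n - t) / (real n - t)"
    if "n \<noteq> 0" for n
  proof -
    have e: "real n - 1 - t > -1" using that t by simp
    show ?thesis using powr_int'[OF e u] unfolding g_def by simp
  qed
  have f0: "f 0 = (\<lambda>v. 0)" by (auto simp: f_def c0)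
  have fint: "integrable lborel (f n)" for n
  proof (cases "n = 0")
    case True then show ?thesis by (simp add: f0)
  next
    case False
    then show ?thesis using gint[OF False] unfolding f_def
      by (intro integrable_mult_right) (simp add: complex_of_real_integrable_eq)
  qed
  have fval: "integral\<^sup>L lborel (f n) = complex_of_real (u powr (-t)) * (c n * complex_of_real u ^ n / complex_of_real (real n - t))" for n
  proof (cases "n = 0")
    case True then show ?thesis by (simp add: f0 c0)
  next
    case False
    have "integral\<^sup>L lborel (f n) = c n * complex_of_real (u powr (real n - t) / (real n - t))"
      using gint[OF False] unfolding f_def by simp
    also have "u powr (real n - t) = u powr (-t) * u ^ n"
      using u by (simp add: powr_realpow[symmetric] powr_add[symmetric])
    finally show ?thesis by simp
  qed
  have normf: "norm (f n v) = norm (c n) * g n v" for n v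
    unfolding f_def g_def by (simp add: norm_mult indicator_def)
  have gnn: "g n v \<ge> 0" for n v unfolding g_def by (simp add: indicator_def)
  have normint: "(\<integral>v. norm (f n v) \<partial>lborel) = u powr (-t) * (norm (c n) * u ^ n / (real n - t))" for n
  proof (cases "n = 0")
    case True then show ?thesis by (simp add: f0 c0)
  next
    case False
    have "(\<integral>v. norm (f n v) \<partial>lborel) = norm (c n) * (u powr (real n - t) / (real n - t))"
      using gint[OF False] by (simp add: normf)
    also have "u powr (real n - t) = u powr (-t) * u ^ n"
      using u by (simp add: powr_realpow[symmetric] powr_add[symmetric])
    finally show ?thesis by simp
  qed
  have gv: "g n v = v powr (-1-t) * v ^ n" if "0 < v" "v < u" for n v
  proof -
    have e: "real n - 1 - t = (-1-t) + real n" by simp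
    show ?thesis using that unfolding g_def e by (simp add: powr_add powr_realpow)
  qed
  have AEs: "AE v in lborel. summable (\<lambda>n. norm (f n v))"
  proof (rule AE_I2)
    fix v
    show "summable (\<lambda>n. norm (f n v))"
    proof (cases "0 < v \<and> v < u")
      case True
      then have "summable (\<lambda>n. v powr (-1-t) * (norm (c n) * v ^ n))"
        by (intro summable_mult sumv) auto
      then show ?thesis using True by (simp add: normf gv mult_ac)
    next
      case False
      then have "g n v = 0" for n unfolding g_def by simp
      then show ?thesis by (simp add: normf)
    qed
  qed
  have sI: "summable (\<lambda>n. \<integral>v. norm (f n v) \<partial>lborel)"
    unfolding normint by (intro summable_mult sumu)
  have main: "(\<integral>v. (\<Sum>n. f n v) \<partial>lborel) = (\<Sum>n. integral\<^sup>L lborel (f n))"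
    by (rule integral_suminf[OF fint AEs sI])
  have lhs: "indicator {0<..<u} v *\<^sub>R (complex_of_real (v powr (-1-t)) * (\<Sum>n. c n * complex_of_real v ^ n))
        = (\<Sum>n. f n v)" for v
  proof (cases "0 < v \<and> v < u")
    case True
    have sm: "summable (\<lambda>n. c n * complex_of_real v ^ n)"
    proof -
      have s: "summable (\<lambda>n. norm (c n) * v ^ n)" using sumv[of v] True by blast
      have e: "norm (c n * complex_of_real v ^ n) = norm (c n) * v ^ n" for n
        using True by (simp add: norm_mult norm_power)
      show ?thesis by (rule summable_norm_cancel) (simp only: e s)
    qed
    have fn: "f n v = complex_of_real (v powr (-1-t)) * (c n * complex_of_real v ^ n)" for n
      using True unfolding f_def by (simp add: gv mult.left_commute)
    have "(\<Sum>n. f n v) = (\<Sum>n. complex_of_real (v powr (-1-t)) * (c n * complex_of_real v ^ n))"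
      by (simp only: fn)
    also have "\<dots> = complex_of_real (v powr (-1-t)) * (\<Sum>n. c n * complex_of_real v ^ n)"
      by (rule suminf_mult[OF sm])
    finally show ?thesis using True by simp
  next
    case False
    then have "g n v = 0" for n unfolding g_def by simp
    then show ?thesis using False by (simp add: f_def)
  qed
  have sm2: "summable (\<lambda>n. c n * complex_of_real u ^ n / complex_of_real (real n - t))"
  proof (rule summable_norm_cancel)
    have "norm (c n * complex_of_real u ^ n / complex_of_real (real n - t)) = norm (c n) * u ^ n / (real n - t)" for n
    proof (cases "n = 0")
      case True then show ?thesis by (simp add: c0)
    next
      case False
      then have "real n - t > 0" using t by simp
      then have h: "norm (complex_of_real (real n - t)) = real n - t" by (metis norm_of_real abs_of_pos)
      show ?thesis using u h by (simp add: norm_mult norm_divide norm_power del: of_real_diff)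
    qed
    then show "summable (\<lambda>n. norm (c n * complex_of_real u ^ n / complex_of_real (real n - t)))"
      using sumu by simp
  qed
  have "(LINT v:{0<..<u}|lborel. complex_of_real (v powr (-1-t)) * (\<Sum>n. c n * complex_of_real v ^ n))
      = (\<integral>v. (\<Sum>n. f n v) \<partial>lborel)"
    unfolding set_lebesgue_integral_def lhs ..
  also have "\<dots> = (\<Sum>n. complex_of_real (u powr (-t)) * (c n * complex_of_real u ^ n / complex_of_real (real n - t)))"
    unfolding main fval ..
  also have "\<dots> = complex_of_real (u powr (-t)) * (\<Sum>n. c n * complex_of_real u ^ n / complex_of_real (real n - t))"
    by (rule suminf_mult[OF sm2])
  finally show ?thesis .
qed


fun lP :: "letter \<Rightarrow> complex" where
  "lP X0 = 0" | "lP (XL i xs \<tau>) = prod_list (take i xs)"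
fun lT :: "letter \<Rightarrow> real" where
  "lT X0 = 0" | "lT (XL i xs \<tau>) = \<tau>"
fun isXL :: "letter \<Rightarrow> bool" where
  "isXL X0 = False" | "isXL (XL i xs \<tau>) = True"

lemma omega_XL: "isXL y \<Longrightarrow> omega y u = lP y / (1 - lP y * complex_of_real u) * complex_of_real (1 / u powr lT y)"
  by (cases y) auto

definition tt :: "(nat \<times> letter) list \<Rightarrow> real" where
  "tt L = sum_list (map (\<lambda>p. lT (snd p)) L)"

lemma tt_simps[simp]: "tt [] = 0" "tt (p # L) = lT (snd p) + tt L"
  by (simp_all add: tt_def)

fun wordL :: "(nat \<times> letter) list \<Rightarrow> letter list" where
  "wordL [] = []"
| "wordL (p # L) = replicate (fst p - 1) X0 @ snd p # wordL L"

fun Aco :: "(nat \<times> letter) list \<Rightarrow> nat \<Rightarrow> complex" where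
  "Aco [] n = (if n = 0 then 1 else 0)"
| "Aco (p # L) n = (\<Sum>m<n. lP (snd p) ^ (n - m) * Aco L m) / complex_of_real (real n - tt (p # L)) ^ fst p"

fun cond :: "(nat \<times> letter) list \<Rightarrow> bool" where
  "cond [] = True"
| "cond (p # L) = (fst p \<ge> 1 \<and> norm (lP (snd p)) \<le> 1 \<and> isXL (snd p) \<and> tt (p # L) < 1 \<and> cond L)"

lemma geom_shift:
  fixes z :: complex assumes "norm z < 1"
  shows "(\<lambda>j. if j = 0 then 0 else z ^ j) sums (z / (1 - z))"
proof -
  have "(\<lambda>j. z * z ^ j) sums (z * (1 / (1 - z)))"
    by (intro sums_mult geometric_sums assms)
  then have "(\<lambda>j. (\<lambda>j. if j = 0 then 0 else z ^ j) (Suc j)) sums (z / (1 - z))"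
    by simp
  then show ?thesis by (subst (asm) sums_Suc_iff) simp
qed

lemma PW:
  fixes P :: complex and A :: "nat \<Rightarrow> complex" and v \<tau> t' :: real
  assumes P: "norm P \<le> 1" and v: "0 < v" "v < 1"
    and sA: "summable (\<lambda>m. norm (A m) * v ^ m)"
  shows "P / (1 - P * complex_of_real v) * complex_of_real (1 / v powr \<tau>)
          * (complex_of_real (v powr (- t')) * (\<Sum>m. A m * complex_of_real v ^ m))
       = complex_of_real (v powr (-1 - (\<tau> + t'))) * (\<Sum>n. (\<Sum>m<n. P ^ (n - m) * A m) * complex_of_real v ^ n)"
proof -
  define z where "z = P * complex_of_real v"
  have nz: "norm z < 1"
  proof -
    have "norm z = norm P * v" using v by (simp add: z_def norm_mult)
    also have "\<dots> \<le> 1 * v" using P v by (intro mult_right_mono) auto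
    finally show ?thesis using v by simp
  qed
  define p where "p j = (if j = 0 then 0 else z ^ j)" for j
  define a where "a m = A m * complex_of_real v ^ m" for m
  have ps: "p sums (z / (1 - z))" unfolding p_def by (rule geom_shift[OF nz])
  have np: "summable (\<lambda>j. norm (p j))"
  proof (rule summable_comparison_test[where g = "\<lambda>j. norm z ^ j"])
    show "\<exists>N. \<forall>n\<ge>N. norm (norm (p n)) \<le> norm z ^ n"
      by (auto simp: p_def norm_power)
    show "summable (\<lambda>j. norm z ^ j)" using nz by (intro summable_geometric) simp
  qed
  have na: "summable (\<lambda>m. norm (a m))"
    using sA v by (simp add: a_def norm_mult norm_power)
  have cp: "(\<Sum>k. a k) * (\<Sum>k. p k) = (\<Sum>k. \<Sum>i\<le>k. a i * p (k - i))"
    by (rule Cauchy_product[OF na np])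
  have inner: "(\<Sum>i\<le>k. a i * p (k - i)) = (\<Sum>m<k. P ^ (k - m) * A m) * complex_of_real v ^ k" for k
  proof -
    have "(\<Sum>i\<le>k. a i * p (k - i)) = (\<Sum>i<k. a i * p (k - i))"
      by (simp add: lessThan_Suc_atMost[symmetric] p_def)
    also have "\<dots> = (\<Sum>m<k. P ^ (k - m) * A m * complex_of_real v ^ k)"
    proof (rule sum.cong)
      fix m assume "m \<in> {..<k}"
      then have "k - m \<noteq> 0" "m + (k - m) = k" by auto
      then have "complex_of_real v ^ m * complex_of_real v ^ (k - m) = complex_of_real v ^ k"
        by (metis power_add)
      then show "a m * p (k - m) = P ^ (k - m) * A m * complex_of_real v ^ k"
        using \<open>k - m \<noteq> 0\<close> unfolding a_def p_def z_def
        by (simp add: power_mult_distrib mult_ac)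
    qed simp
    also have "\<dots> = (\<Sum>m<k. P ^ (k - m) * A m) * complex_of_real v ^ k"
      by (simp add: sum_distrib_right)
    finally show ?thesis .
  qed
  have ne: "1 - z \<noteq> 0" using nz by auto
  have "P / (1 - z) = complex_of_real (1 / v) * (z / (1 - z))"
    using v by (simp add: z_def field_simps)
  have pw: "complex_of_real (v powr (-1 - (\<tau> + t'))) = complex_of_real (1 / v) * complex_of_real (1 / v powr \<tau>) * complex_of_real (v powr (- t'))"
  proof -
    have e: "-1 - (\<tau> + t') = (-1) + (-\<tau>) + (-t')" by simp
    have "v powr (-1 - (\<tau> + t')) = v powr (-1) * v powr (-\<tau>) * v powr (-t')"
      by (simp only: e powr_add)
    then show ?thesis using v by (simp add: powr_minus divide_inverse)
  qed
  have "P / (1 - P * complex_of_real v) * complex_of_real (1 / v powr \<tau>)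
          * (complex_of_real (v powr (- t')) * (\<Sum>m. A m * complex_of_real v ^ m))
      = complex_of_real (1 / v) * complex_of_real (1 / v powr \<tau>) * complex_of_real (v powr (- t'))
         * ((\<Sum>k. a k) * (\<Sum>k. p k))"
    using \<open>P / (1 - z) = _\<close> ps unfolding z_def a_def by (simp add: sums_iff mult_ac)
  also have "\<dots> = complex_of_real (v powr (-1 - (\<tau> + t'))) * (\<Sum>n. (\<Sum>m<n. P ^ (n - m) * A m) * complex_of_real v ^ n)"
    unfolding cp inner pw ..
  finally show ?thesis .
qed



lemma ident0: "(a::complex) * w / x = a / x ^ Suc 0 * w"
  by simp
lemma ident1: "(a::complex) / x ^ Suc k * w / x = a / x ^ Suc (Suc k) * w"
  by (simp add: divide_divide_eq_left power_Suc field_simps)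

lemma sum_div:
  fixes c :: "nat \<Rightarrow> complex"
  assumes c0: "c 0 = 0" and t: "t < 1" and s: "summable (\<lambda>n. norm (c n) * u ^ n)" and u: "0 \<le> u"
  shows "summable (\<lambda>n. norm (c n) * u ^ n / (real n - t))"
proof (rule summable_comparison_test[where g = "\<lambda>n. norm (c n) * u ^ n / (1 - t)"])
  show "summable (\<lambda>n. norm (c n) * u ^ n / (1 - t))" by (rule summable_divide[OF s])
  show "\<exists>N. \<forall>n\<ge>N. norm (norm (c n) * u ^ n / (real n - t)) \<le> norm (c n) * u ^ n / (1 - t)"
  proof (intro exI allI impI)
    fix n :: nat assume "1 \<le> n"
    then have p: "1 - t \<le> real n - t" "0 < 1 - t" using t by auto
    have nn: "0 \<le> norm (c n) * u ^ n" using u by simp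
    have "norm (norm (c n) * u ^ n / (real n - t)) = norm (c n) * u ^ n / (real n - t)"
      using p nn by simp
    also have "\<dots> \<le> norm (c n) * u ^ n / (1 - t)"
      using p nn by (intro divide_left_mono) auto
    finally show "norm (norm (c n) * u ^ n / (real n - t)) \<le> norm (c n) * u ^ n / (1 - t)" .
  qed
qed

lemma Bk_sum:
  fixes B :: "nat \<Rightarrow> complex"
  assumes B0: "B 0 = 0" and t: "t < 1" and s: "summable (\<lambda>n. norm (B n) * v ^ n)" and v: "0 \<le> v"
  shows "summable (\<lambda>n. norm (B n / complex_of_real (real n - t) ^ k) * v ^ n)"
proof (rule summable_comparison_test[where g = "\<lambda>n. norm (B n) * v ^ n / (1 - t) ^ k"])
  show "summable (\<lambda>n. norm (B n) * v ^ n / (1 - t) ^ k)" by (rule summable_divide[OF s])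
  show "\<exists>N. \<forall>n\<ge>N. norm (norm (B n / complex_of_real (real n - t) ^ k) * v ^ n) \<le> norm (B n) * v ^ n / (1 - t) ^ k"
  proof (intro exI allI impI)
    fix n :: nat assume "1 \<le> n"
    then have p: "1 - t \<le> real n - t" "0 < 1 - t" using t by auto
    have nn: "0 \<le> norm (B n) * v ^ n" using v by simp
    have h: "norm (complex_of_real (real n - t)) = real n - t" using p by (metis norm_of_real abs_of_pos less_le_trans)
    have "norm (norm (B n / complex_of_real (real n - t) ^ k) * v ^ n) = norm (B n) * v ^ n / (real n - t) ^ k"
      using v h by (simp add: norm_divide norm_power del: of_real_diff)
    also have "\<dots> \<le> norm (B n) * v ^ n / (1 - t) ^ k"
      using p nn by (intro divide_left_mono power_mono mult_pos_pos zero_less_power) auto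
    finally show "norm (norm (B n / complex_of_real (real n - t) ^ k) * v ^ n) \<le> norm (B n) * v ^ n / (1 - t) ^ k" .
  qed
qed

lemma Bsum:
  fixes P :: complex and A :: "nat \<Rightarrow> complex"
  assumes P: "norm P \<le> 1" and v: "0 \<le> v" "v < 1" and sA: "summable (\<lambda>m. norm (A m) * v ^ m)"
  shows "summable (\<lambda>n. norm (\<Sum>m<n. P ^ (n - m) * A m) * v ^ n)"
proof -
  define a where "a m = norm (A m) * v ^ m" for m
  define b where "b j = v ^ j" for j
  have na: "summable (\<lambda>k. norm (a k))" using sA v by (simp add: a_def)
  have nb: "summable (\<lambda>k. norm (b k))" using v by (simp add: b_def summable_geometric)
  have cp: "summable (\<lambda>k. \<Sum>i\<le>k. a i * b (k - i))" by (rule summable_Cauchy_product[OF na nb])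
  show ?thesis
  proof (rule summable_comparison_test[OF _ cp], intro exI allI impI)
    fix n :: nat
    have "norm (\<Sum>m<n. P ^ (n - m) * A m) \<le> (\<Sum>m<n. norm (P ^ (n - m) * A m))" by (rule norm_sum)
    also have "\<dots> \<le> (\<Sum>m<n. norm (A m))"
    proof (rule sum_mono)
      fix m
      have "norm P ^ (n - m) \<le> 1" using P by (simp add: power_le_one)
      then show "norm (P ^ (n - m) * A m) \<le> norm (A m)"
        by (simp add: norm_mult norm_power mult_left_le_one_le)
    qed
    finally have 1: "norm (\<Sum>m<n. P ^ (n - m) * A m) * v ^ n \<le> (\<Sum>m<n. norm (A m)) * v ^ n"
      using v by (intro mult_right_mono) auto
    have 2: "(\<Sum>m<n. norm (A m)) * v ^ n = (\<Sum>m<n. a m * b (n - m))"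
      unfolding sum_distrib_right a_def b_def
    proof (rule sum.cong)
      fix m assume "m \<in> {..<n}"
      then have "v ^ n = v ^ m * v ^ (n - m)" by (simp add: power_add[symmetric])
      then show "norm (A m) * v ^ n = norm (A m) * v ^ m * v ^ (n - m)" by simp
    qed simp
    have 3: "(\<Sum>m<n. a m * b (n - m)) \<le> (\<Sum>m\<le>n. a m * b (n - m))"
      using v by (intro sum_mono2) (auto simp: a_def b_def)
    have "norm (norm (\<Sum>m<n. P ^ (n - m) * A m) * v ^ n) = norm (\<Sum>m<n. P ^ (n - m) * A m) * v ^ n"
      using v by simp
    then show "norm (norm (\<Sum>m<n. P ^ (n - m) * A m) * v ^ n) \<le> (\<Sum>i\<le>n. a i * b (n - i))"
      using 1 2 3 by linarith
  qed
qed



lemma kclaim: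
  assumes c: "cond (p # L)"
    and rep: "\<And>u. 0 < u \<Longrightarrow> u < 1 \<Longrightarrow> alpha0 (wordL L) u = complex_of_real (u powr (- tt L)) * (\<Sum>n. Aco L n * complex_of_real u ^ n)"
    and sL: "\<And>v. 0 \<le> v \<Longrightarrow> v < 1 \<Longrightarrow> summable (\<lambda>n. norm (Aco L n) * v ^ n)"
  shows "0 < u \<Longrightarrow> u < 1 \<Longrightarrow> alpha0 (replicate k X0 @ snd p # wordL L) u
     = complex_of_real (u powr (- tt (p # L))) *
       (\<Sum>n. (\<Sum>m<n. lP (snd p) ^ (n - m) * Aco L m) / complex_of_real (real n - tt (p # L)) ^ Suc k * complex_of_real u ^ n)"
proof (induction k arbitrary: u)
  define P where "P = lP (snd p)"
  define t where "t = tt (p # L)"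
  define B where "B n = (\<Sum>m<n. P ^ (n - m) * Aco L m)" for n
  have P1: "norm P \<le> 1" and XL: "isXL (snd p)" and t1: "t < 1"
    using c by (auto simp: P_def t_def)
  have B0: "B 0 = 0" by (simp add: B_def)
  have Bs: "summable (\<lambda>n. norm (B n) * v ^ n)" if "0 \<le> v" "v < 1" for v
    unfolding B_def by (rule Bsum[OF P1 that sL[OF that]])
  case 0
  have "alpha0 (replicate 0 X0 @ snd p # wordL L) u = (LINT v:{0<..<u}|lborel. omega (snd p) v * alpha0 (wordL L) v)"
    by simp
  also have "\<dots> = (LINT v:{0<..<u}|lborel. complex_of_real (v powr (-1-t)) * (\<Sum>n. B n * complex_of_real v ^ n))"
  proof (rule set_lebesgue_integral_cong)
    show "{0<..<u} \<in> sets lborel" by simp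
    show "\<forall>v. v \<in> {0<..<u} \<longrightarrow> omega (snd p) v * alpha0 (wordL L) v = complex_of_real (v powr (-1-t)) * (\<Sum>n. B n * complex_of_real v ^ n)"
    proof (intro allI impI)
      fix v assume "v \<in> {0<..<u}"
      then have v: "0 < v" "v < 1" using 0 by auto
      have "omega (snd p) v * alpha0 (wordL L) v = P / (1 - P * complex_of_real v) * complex_of_real (1 / v powr lT (snd p))
          * (complex_of_real (v powr (- tt L)) * (\<Sum>m. Aco L m * complex_of_real v ^ m))"
        using omega_XL[OF XL] rep[OF v] by (simp add: P_def)
      also have "\<dots> = complex_of_real (v powr (-1 - (lT (snd p) + tt L))) * (\<Sum>n. B n * complex_of_real v ^ n)"
        unfolding B_def by (rule PW[OF P1 v sL]) (use v in auto)
      finally show "omega (snd p) v * alpha0 (wordL L) v = complex_of_real (v powr (-1-t)) * (\<Sum>n. B n * complex_of_real v ^ n)"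
        by (simp add: t_def)
    qed
  qed
  also have "\<dots> = complex_of_real (u powr (-t)) * (\<Sum>n. B n * complex_of_real u ^ n / complex_of_real (real n - t))"
  proof (rule ILem[where c=B and t=t, OF B0 t1])
    show "0 < u" using 0 by simp
    show "summable (\<lambda>n. norm (B n) * u ^ n / (real n - t))"
      using 0 by (intro sum_div[OF B0 t1 Bs]) auto
    show "summable (\<lambda>n. norm (B n) * v ^ n)" if "0 < v" "v < u" for v
      using that 0 by (intro Bs) auto
  qed
  also have "\<dots> = complex_of_real (u powr (-t)) * (\<Sum>n. B n / complex_of_real (real n - t) ^ Suc 0 * complex_of_real u ^ n)"
    by (simp only: ident0)
  finally show ?case by (simp only: P_def t_def B_def)
next
  define P where "P = lP (snd p)"
  define t where "t = tt (p # L)"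
  define B where "B n = (\<Sum>m<n. P ^ (n - m) * Aco L m)" for n
  have P1: "norm P \<le> 1" and XL: "isXL (snd p)" and t1: "t < 1"
    using c by (auto simp: P_def t_def)
  have B0: "B 0 = 0" by (simp add: B_def)
  have Bs: "summable (\<lambda>n. norm (B n) * v ^ n)" if "0 \<le> v" "v < 1" for v
    unfolding B_def by (rule Bsum[OF P1 that sL[OF that]])
  case (Suc k)
  define C where "C n = B n / complex_of_real (real n - t) ^ Suc k" for n
  have C0: "C 0 = 0" by (simp add: C_def B0)
  have Cs: "summable (\<lambda>n. norm (C n) * v ^ n)" if "0 \<le> v" "v < 1" for v
    unfolding C_def by (rule Bk_sum[OF B0 t1 Bs[OF that] that(1)])
  have IH: "alpha0 (replicate k X0 @ snd p # wordL L) v = complex_of_real (v powr (- t)) * (\<Sum>n. C n * complex_of_real v ^ n)"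
    if "0 < v" "v < 1" for v
    using Suc.IH[OF that] by (simp only: P_def t_def B_def C_def)
  have "alpha0 (replicate (Suc k) X0 @ snd p # wordL L) u = (LINT v:{0<..<u}|lborel. omega X0 v * alpha0 (replicate k X0 @ snd p # wordL L) v)"
    by simp
  also have "\<dots> = (LINT v:{0<..<u}|lborel. complex_of_real (v powr (-1-t)) * (\<Sum>n. C n * complex_of_real v ^ n))"
  proof (rule set_lebesgue_integral_cong)
    show "{0<..<u} \<in> sets lborel" by simp
    show "\<forall>v. v \<in> {0<..<u} \<longrightarrow> omega X0 v * alpha0 (replicate k X0 @ snd p # wordL L) v = complex_of_real (v powr (-1-t)) * (\<Sum>n. C n * complex_of_real v ^ n)"
    proof (intro allI impI)
      fix v assume "v \<in> {0<..<u}"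
      then have v: "0 < v" "v < 1" using Suc.prems by auto
      have e: "v powr (-1-t) = 1 / v * v powr (-t)"
      proof -
        have "v powr (-1-t) = v powr (-1) * v powr (-t)" by (simp only: diff_conv_add_uminus powr_add)
        then show ?thesis using v by (simp add: powr_minus divide_inverse)
      qed
      show "omega X0 v * alpha0 (replicate k X0 @ snd p # wordL L) v = complex_of_real (v powr (-1-t)) * (\<Sum>n. C n * complex_of_real v ^ n)"
        unfolding IH[OF v] e by simp
    qed
  qed
  also have "\<dots> = complex_of_real (u powr (-t)) * (\<Sum>n. C n * complex_of_real u ^ n / complex_of_real (real n - t))"
  proof (rule ILem[where c=C and t=t, OF C0 t1])
    show "0 < u" using Suc.prems by simp
    show "summable (\<lambda>n. norm (C n) * u ^ n / (real n - t))"
      using Suc.prems by (intro sum_div[OF C0 t1 Cs]) auto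
    show "summable (\<lambda>n. norm (C n) * v ^ n)" if "0 < v" "v < u" for v
      using that Suc.prems by (intro Cs) auto
  qed
  also have "\<dots> = complex_of_real (u powr (-t)) * (\<Sum>n. B n / complex_of_real (real n - t) ^ Suc (Suc k) * complex_of_real u ^ n)"
    by (simp only: C_def ident1)
  finally show ?case by (simp only: P_def t_def B_def)
qed



lemma word_main:
  "cond L \<Longrightarrow> (\<forall>u. 0 < u \<and> u < 1 \<longrightarrow> alpha0 (wordL L) u = complex_of_real (u powr (- tt L)) * (\<Sum>n. Aco L n * complex_of_real u ^ n))
     \<and> (\<forall>v. 0 \<le> v \<and> v < 1 \<longrightarrow> summable (\<lambda>n. norm (Aco L n) * v ^ n))"
proof (induction L)
  case Nil
  have f: "(\<lambda>n. Aco [] n * complex_of_real u ^ n) = (\<lambda>n. if n = 0 then 1 else 0)" for u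
    by auto
  have f2: "(\<lambda>n. norm (Aco [] n) * v ^ n) = (\<lambda>n. if n = 0 then 1 else 0)" for v :: real
    by auto
  have s1: "(\<lambda>n::nat. if n = 0 then 1 else 0 :: complex) sums 1"
    using sums_single[of 0 "\<lambda>_. 1::complex"] by simp
  have s2: "(\<lambda>n::nat. if n = 0 then 1 else 0 :: real) sums 1"
    using sums_single[of 0 "\<lambda>_. 1::real"] by simp
  show ?case
  proof (intro conjI allI impI)
    fix u :: real assume u: "0 < u \<and> u < 1"
    have "(\<Sum>n. Aco [] n * complex_of_real u ^ n) = 1"
      unfolding f by (rule sums_unique[OF s1, symmetric])
    then show "alpha0 (wordL []) u = complex_of_real (u powr (- tt [])) * (\<Sum>n. Aco [] n * complex_of_real u ^ n)"
      using u by simp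
  next
    fix v :: real assume v: "0 \<le> v \<and> v < 1"
    show "summable (\<lambda>n. norm (Aco [] n) * v ^ n)"
      unfolding f2 using s2 by (rule sums_summable)
  qed
next
  case (Cons p L)
  have c: "cond (p # L)" using Cons.prems .
  then have cL: "cond L" by simp
  have rep: "\<And>u. 0 < u \<Longrightarrow> u < 1 \<Longrightarrow> alpha0 (wordL L) u = complex_of_real (u powr (- tt L)) * (\<Sum>n. Aco L n * complex_of_real u ^ n)"
    using Cons.IH[OF cL] by blast
  have sL: "\<And>v. 0 \<le> v \<Longrightarrow> v < 1 \<Longrightarrow> summable (\<lambda>n. norm (Aco L n) * v ^ n)"
    using Cons.IH[OF cL] by blast
  have s: "Suc (fst p - 1) = fst p" using c by simp
  define P where "P = lP (snd p)"
  define t where "t = tt (p # L)"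
  define B where "B n = (\<Sum>m<n. P ^ (n - m) * Aco L m)" for n
  have P1: "norm P \<le> 1" and t1: "t < 1"
    using c by (auto simp: P_def t_def)
  have B0: "B 0 = 0" by (simp add: B_def)
  have Bs: "summable (\<lambda>n. norm (B n) * v ^ n)" if "0 \<le> v" "v < 1" for v
    unfolding B_def by (rule Bsum[OF P1 that sL[OF that]])
  have Aeq: "Aco (p # L) n = B n / complex_of_real (real n - t) ^ fst p" for n
    by (simp add: B_def P_def t_def)
  show ?case
  proof (intro conjI allI impI)
    fix u :: real assume u: "0 < u \<and> u < 1"
    have "alpha0 (wordL (p # L)) u = alpha0 (replicate (fst p - 1) X0 @ snd p # wordL L) u" by simp
    also have "\<dots> = complex_of_real (u powr (- t)) * (\<Sum>n. B n / complex_of_real (real n - t) ^ Suc (fst p - 1) * complex_of_real u ^ n)"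
      using kclaim[OF c rep sL, of u "fst p - 1"] u by (simp only: P_def t_def B_def)
    also have "\<dots> = complex_of_real (u powr (- tt (p # L))) * (\<Sum>n. Aco (p # L) n * complex_of_real u ^ n)"
      by (simp only: s Aeq t_def)
    finally show "alpha0 (wordL (p # L)) u = complex_of_real (u powr (- tt (p # L))) * (\<Sum>n. Aco (p # L) n * complex_of_real u ^ n)" .
  next
    fix v :: real assume v: "0 \<le> v \<and> v < 1"
    show "summable (\<lambda>n. norm (Aco (p # L) n) * v ^ n)"
      unfolding Aeq using v by (intro Bk_sum[OF B0 t1 Bs]) auto
  qed
qed

lemma top_main:
  assumes c: "cond (p # L)" and s2: "fst p \<ge> 2" and sm: "summable (\<lambda>n. norm (Aco (p # L) n))"
  shows "alpha0 (wordL (p # L)) 1 = (\<Sum>n. Aco (p # L) n)"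
proof -
  have cL: "cond L" using c by simp
  have rep: "\<And>u. 0 < u \<Longrightarrow> u < 1 \<Longrightarrow> alpha0 (wordL L) u = complex_of_real (u powr (- tt L)) * (\<Sum>n. Aco L n * complex_of_real u ^ n)"
    using word_main[OF cL] by blast
  have sL: "\<And>v. 0 \<le> v \<Longrightarrow> v < 1 \<Longrightarrow> summable (\<lambda>n. norm (Aco L n) * v ^ n)"
    using word_main[OF cL] by blast
  define P where "P = lP (snd p)"
  define t where "t = tt (p # L)"
  define B where "B n = (\<Sum>m<n. P ^ (n - m) * Aco L m)" for n
  have P1: "norm P \<le> 1" and t1: "t < 1"
    using c by (auto simp: P_def t_def)
  have B0: "B 0 = 0" by (simp add: B_def)
  have Bs: "summable (\<lambda>n. norm (B n) * v ^ n)" if "0 \<le> v" "v < 1" for v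
    unfolding B_def by (rule Bsum[OF P1 that sL[OF that]])
  have Aeq: "Aco (p # L) n = B n / complex_of_real (real n - t) ^ fst p" for n
    by (simp add: B_def P_def t_def)
  define k where "k = fst p - 2"
  have k: "fst p = Suc (Suc k)" using s2 by (simp add: k_def)
  define C where "C n = B n / complex_of_real (real n - t) ^ Suc k" for n
  have C0: "C 0 = 0" by (simp add: C_def B0)
  have Cs: "summable (\<lambda>n. norm (C n) * v ^ n)" if "0 \<le> v" "v < 1" for v
    unfolding C_def by (rule Bk_sum[OF B0 t1 Bs[OF that] that(1)])
  have IH: "alpha0 (replicate k X0 @ snd p # wordL L) v = complex_of_real (v powr (- t)) * (\<Sum>n. C n * complex_of_real v ^ n)"
    if "0 < v" "v < 1" for v
    using kclaim[OF c rep sL that, of k] by (simp only: P_def t_def B_def C_def)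
  have w: "wordL (p # L) = X0 # (replicate k X0 @ snd p # wordL L)"
    using k by simp
  have "alpha0 (wordL (p # L)) 1 = (LINT v:{0<..<1}|lborel. omega X0 v * alpha0 (replicate k X0 @ snd p # wordL L) v)"
    unfolding w by simp
  also have "\<dots> = (LINT v:{0<..<1}|lborel. complex_of_real (v powr (-1-t)) * (\<Sum>n. C n * complex_of_real v ^ n))"
  proof (rule set_lebesgue_integral_cong)
    show "{0<..<1::real} \<in> sets lborel" by simp
    show "\<forall>v. v \<in> {0<..<1} \<longrightarrow> omega X0 v * alpha0 (replicate k X0 @ snd p # wordL L) v = complex_of_real (v powr (-1-t)) * (\<Sum>n. C n * complex_of_real v ^ n)"
    proof (intro allI impI)
      fix v :: real assume "v \<in> {0<..<1}"
      then have v: "0 < v" "v < 1" by auto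
      have e: "v powr (-1-t) = 1 / v * v powr (-t)"
      proof -
        have "v powr (-1-t) = v powr (-1) * v powr (-t)" by (simp only: diff_conv_add_uminus powr_add)
        then show ?thesis using v by (simp add: powr_minus divide_inverse)
      qed
      show "omega X0 v * alpha0 (replicate k X0 @ snd p # wordL L) v = complex_of_real (v powr (-1-t)) * (\<Sum>n. C n * complex_of_real v ^ n)"
        unfolding IH[OF v] e by simp
    qed
  qed
  also have "\<dots> = complex_of_real (1 powr (-t)) * (\<Sum>n. C n * complex_of_real 1 ^ n / complex_of_real (real n - t))"
  proof (rule ILem[where c=C and t=t, OF C0 t1])
    show "(0::real) < 1" by simp
    have eq: "norm (C n) * 1 ^ n / (real n - t) = norm (Aco (p # L) n)" for n
    proof (cases "n = 0")
      case True then show ?thesis by (simp add: C0 Aeq B0)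
    next
      case False
      then have pos: "real n - t > 0" using t1 by simp
      then have h: "norm (complex_of_real (real n - t)) = real n - t" by (metis norm_of_real abs_of_pos)
      show ?thesis unfolding C_def Aeq k using h pos
        by (simp add: norm_divide norm_power norm_mult del: of_real_diff)
    qed
    show "summable (\<lambda>n. norm (C n) * 1 ^ n / (real n - t))"
      unfolding eq by (rule sm)
    show "summable (\<lambda>n. norm (C n) * v ^ n)" if "0 < v" "v < 1" for v
      using that by (intro Cs) auto
  qed
  also have "\<dots> = (\<Sum>n. Aco (p # L) n)"
  proof -
    have "C n * complex_of_real 1 ^ n / complex_of_real (real n - t) = Aco (p # L) n" for n
      unfolding C_def Aeq k using ident1[of "B n" "real n - t" k 1] by simp
    then show ?thesis by simp
  qed
  finally show ?thesis .
qed



definition hd0 :: "nat list \<Rightarrow> nat" where "hd0 ns = (case ns of [] \<Rightarrow> 0 | n # _ \<Rightarrow> n)"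
definition DP :: "nat \<Rightarrow> nat list set" where
  "DP k = {ns. length ns = k \<and> sorted_wrt (>) ns \<and> (\<forall>n\<in>set ns. 0 < n)}"
definition DPh :: "nat \<Rightarrow> nat \<Rightarrow> nat list set" where
  "DPh k n = {ns \<in> DP k. hd0 ns = n}"

fun gco :: "(nat \<times> letter) list \<Rightarrow> nat list \<Rightarrow> complex" where
  "gco [] [] = 1"
| "gco (p # L) (n # ns) = lP (snd p) ^ (n - hd0 ns) / complex_of_real (real n - tt (p # L)) ^ fst p * gco L ns"
| "gco _ _ = 0"

lemma hd0_simps[simp]: "hd0 [] = 0" "hd0 (n # ns) = n" by (simp_all add: hd0_def)

lemma DPh_le: "ns \<in> DPh k n \<Longrightarrow> set ns \<subseteq> {..n}"
  by (cases ns) (auto simp: DPh_def DP_def less_imp_le)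

lemma DPh_finite: "finite (DPh k n)"
proof (rule finite_subset)
  show "DPh k n \<subseteq> {ns. set ns \<subseteq> {..n} \<and> length ns = k}"
    using DPh_le by (auto simp: DPh_def DP_def)
  show "finite {ns. set ns \<subseteq> {..n} \<and> length ns = k}"
    by (rule finite_lists_length_eq) simp
qed

lemma DPh_0: "DPh 0 n = (if n = 0 then {[]} else {})"
  by (auto simp: DPh_def DP_def)

lemma DPh_Suc0: "DPh (Suc k) 0 = {}"
proof -
  have False if "ns \<in> DPh (Suc k) 0" for ns
    using that by (cases ns) (auto simp: DPh_def DP_def)
  then show ?thesis by blast
qed

lemma DPh_Suc: assumes "0 < n" shows "DPh (Suc k) n = (Cons n) ` (\<Union>m<n. DPh k m)"
proof
  show "DPh (Suc k) n \<subseteq> (Cons n) ` (\<Union>m<n. DPh k m)"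
  proof
    fix ns assume ns: "ns \<in> DPh (Suc k) n"
    then obtain xs where nsx: "ns = n # xs" by (cases ns) (auto simp: DPh_def DP_def)
    have xs: "xs \<in> DP k" and d: "\<forall>y\<in>set xs. y < n"
      using ns nsx by (auto simp: DPh_def DP_def)
    have "hd0 xs < n"
    proof (cases xs)
      case Nil then show ?thesis using assms by simp
    next
      case (Cons y ys) then show ?thesis using d by simp
    qed
    then show "ns \<in> (Cons n) ` (\<Union>m<n. DPh k m)"
      using xs nsx by (auto simp: DPh_def)
  qed
next
  show "(Cons n) ` (\<Union>m<n. DPh k m) \<subseteq> DPh (Suc k) n"
  proof
    fix ns assume "ns \<in> (Cons n) ` (\<Union>m<n. DPh k m)"
    then obtain m xs where m: "m < n" and xs: "xs \<in> DPh k m" and nsx: "ns = n # xs" by blast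
    have "\<forall>y\<in>set xs. y < n" using DPh_le[OF xs] m by auto
    then show "ns \<in> DPh (Suc k) n" using xs nsx assms by (auto simp: DPh_def DP_def)
  qed
qed

lemma Aco_gco: "Aco L n = sum (gco L) (DPh (length L) n)"
proof (induction L arbitrary: n)
  case Nil
  then show ?case by (simp add: DPh_0)
next
  case (Cons p L)
  show ?case
  proof (cases "n = 0")
    case True
    then show ?thesis by (simp add: DPh_Suc0)
  next
    case False
    define D where "D = complex_of_real (real n - tt (p # L)) ^ fst p"
    have "sum (gco (p # L)) (DPh (length (p # L)) n) = sum (gco (p # L)) ((Cons n) ` (\<Union>m<n. DPh (length L) m))"
      using False by (simp add: DPh_Suc)
    also have "\<dots> = sum (\<lambda>ns. gco (p # L) (n # ns)) (\<Union>m<n. DPh (length L) m)"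
      by (subst sum.reindex) (auto simp: inj_on_def)
    also have "\<dots> = (\<Sum>m<n. sum (\<lambda>ns. gco (p # L) (n # ns)) (DPh (length L) m))"
      by (rule sum.UNION_disjoint) (auto simp: DPh_finite[unfolded DPh_def] DPh_def)
    also have "\<dots> = (\<Sum>m<n. lP (snd p) ^ (n - m) / D * Aco L m)"
    proof (rule sum.cong)
      fix m assume "m \<in> {..<n}"
      have "sum (\<lambda>ns. gco (p # L) (n # ns)) (DPh (length L) m) = sum (\<lambda>ns. lP (snd p) ^ (n - m) / D * gco L ns) (DPh (length L) m)"
        by (rule sum.cong) (auto simp: DPh_def D_def)
      also have "\<dots> = lP (snd p) ^ (n - m) / D * Aco L m"
        by (simp add: Cons.IH sum_distrib_left)
      finally show "sum (\<lambda>ns. gco (p # L) (n # ns)) (DPh (length L) m) = lP (snd p) ^ (n - m) / D * Aco L m" .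
    qed simp
    also have "\<dots> = Aco (p # L) n"
      by (simp add: D_def sum_divide_distrib)
    finally show ?thesis ..
  qed
qed

definition absL :: "(nat \<times> letter) list \<Rightarrow> (nat \<times> letter) list" where
  "absL L = map (\<lambda>p. (fst p, XL 1 [complex_of_real (norm (lP (snd p)))] (lT (snd p)))) L"

lemma absL_simps[simp]: "absL [] = []"
  "absL (p # L) = (fst p, XL 1 [complex_of_real (norm (lP (snd p)))] (lT (snd p))) # absL L"
  by (simp_all add: absL_def)

lemma length_absL[simp]: "length (absL L) = length L" by (simp add: absL_def)
lemma tt_absL[simp]: "tt (absL L) = tt L" by (induction L) auto
lemma cond_absL: "cond L \<Longrightarrow> cond (absL L)" by (induction L) auto

lemma DP_Cons: "n # ns \<in> DP (Suc k) \<Longrightarrow> ns \<in> DP k \<and> 0 < n"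
  by (auto simp: DP_def)

lemma gco_absL: "cond L \<Longrightarrow> ns \<in> DP (length L) \<Longrightarrow> gco (absL L) ns = complex_of_real (norm (gco L ns))"
proof (induction L arbitrary: ns)
  case Nil
  then show ?case by (simp add: DP_def)
next
  case (Cons p L)
  obtain n xs where nsx: "ns = n # xs" using Cons.prems(2) by (cases ns) (auto simp: DP_def)
  have xs: "xs \<in> DP (length L)" and n: "0 < n" using DP_Cons Cons.prems(2) nsx by auto
  have cL: "cond L" and t: "tt (p # L) < 1" using Cons.prems(1) by auto
  have pos: "real n - tt (p # L) > 0" using n t by linarith
  have h: "norm (complex_of_real (real n - tt (p # L))) = real n - tt (p # L)"
    using pos by (metis norm_of_real abs_of_pos)
  show ?case
    unfolding nsx using Cons.IH[OF cL xs] h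
    by (simp add: norm_mult norm_divide norm_power del: of_real_diff)
qed

lemma normAco_abs: "cond L \<Longrightarrow> norm (Aco (absL L) n) = (\<Sum>ns\<in>DPh (length L) n. norm (gco L ns))"
proof -
  assume c: "cond L"
  have "Aco (absL L) n = (\<Sum>ns\<in>DPh (length L) n. complex_of_real (norm (gco L ns)))"
    unfolding Aco_gco length_absL
    by (rule sum.cong) (auto simp: DPh_def gco_absL[OF c])
  also have "\<dots> = complex_of_real (\<Sum>ns\<in>DPh (length L) n. norm (gco L ns))" by simp
  finally show ?thesis by (simp add: sum_nonneg del: of_real_sum)
qed



lemma Abound:
  assumes c: "cond (p # L)" and a: "0 \<le> a"
    and sm: "summable (\<lambda>n. norm (Aco L n) * (real n + 1) powr (-a))"
  shows "\<exists>K\<ge>0. \<forall>n\<ge>1. norm (Aco (p # L) n) \<le> K * real n powr a / real n ^ fst p"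
proof -
  define S where "S = (\<Sum>n. norm (Aco L n) * (real n + 1) powr (-a))"
  define t where "t = tt (p # L)"
  define d where "d = min 1 (1 - t)"
  define s where "s = fst p"
  define P where "P = lP (snd p)"
  have t1: "t < 1" and P1: "norm P \<le> 1" using c by (auto simp: t_def P_def)
  have d0: "0 < d" "d \<le> 1" using t1 by (auto simp: d_def)
  have S0: "0 \<le> S" unfolding S_def by (intro suminf_nonneg sm) simp
  show ?thesis
  proof (intro exI[of _ "S / d ^ s"] conjI allI impI)
    show "0 \<le> S / d ^ s" using S0 d0 by simp
    fix n :: nat assume n1: "1 \<le> n"
    have "norm (\<Sum>m<n. P ^ (n - m) * Aco L m) \<le> (\<Sum>m<n. norm (P ^ (n - m) * Aco L m))" by (rule norm_sum)
    also have "\<dots> \<le> (\<Sum>m<n. norm (Aco L m))"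
    proof (rule sum_mono)
      fix m
      have "norm P ^ (n - m) \<le> 1" using P1 by (simp add: power_le_one)
      then show "norm (P ^ (n - m) * Aco L m) \<le> norm (Aco L m)"
        by (simp add: norm_mult norm_power mult_left_le_one_le)
    qed
    also have "\<dots> \<le> (\<Sum>m<n. real n powr a * (norm (Aco L m) * (real m + 1) powr (-a)))"
    proof (rule sum_mono)
      fix m assume "m \<in> {..<n}"
      then have "real m + 1 \<le> real n" by auto
      then have le: "(real m + 1) powr a \<le> real n powr a" using a by (intro powr_mono2) auto
      have pos: "0 < (real m + 1) powr a" by simp
      have e: "real n powr a * (real m + 1) powr (-a) = real n powr a / (real m + 1) powr a"
        by (simp add: powr_minus divide_inverse)
      have "1 \<le> real n powr a * (real m + 1) powr (-a)"
        unfolding e using le pos by simp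
      then show "norm (Aco L m) \<le> real n powr a * (norm (Aco L m) * (real m + 1) powr (-a))"
        using mult_left_mono[of 1 "real n powr a * (real m + 1) powr (-a)" "norm (Aco L m)"]
        by (simp add: mult_ac)
    qed
    also have "\<dots> = real n powr a * (\<Sum>m<n. norm (Aco L m) * (real m + 1) powr (-a))"
      by (simp add: sum_distrib_left)
    also have "\<dots> \<le> real n powr a * S"
      unfolding S_def by (intro mult_left_mono sum_le_suminf sm) auto
    finally have num: "norm (\<Sum>m<n. P ^ (n - m) * Aco L m) \<le> real n powr a * S" .
    have pos: "real n - t > 0" using n1 t1 by linarith
    have h: "norm (complex_of_real (real n - t)) = real n - t"
      using pos by (metis norm_of_real abs_of_pos)
    have dn: "d * real n \<le> real n - t"
    proof (cases "t \<le> 0")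
      case True then show ?thesis using d0 n1 by (simp add: d_def)
    next
      case False
      then have "d = 1 - t" using t1 by (simp add: d_def)
      have "0 \<le> t * (real n - 1)" using False n1 by simp
      moreover have "d * real n = real n - t - t * (real n - 1)"
        using \<open>d = 1 - t\<close> by (simp add: right_diff_distrib left_diff_distrib)
      ultimately show ?thesis by linarith
    qed
    have den: "(d * real n) ^ s \<le> (real n - t) ^ s"
      using dn d0 n1 by (intro power_mono) auto
    have denpos: "0 < (d * real n) ^ s" using d0 n1 by simp
    have "norm (Aco (p # L) n) = norm (\<Sum>m<n. P ^ (n - m) * Aco L m) / (real n - t) ^ s"
      using h by (simp add: P_def t_def s_def norm_divide norm_power del: of_real_diff tt_simps)
    also have "\<dots> \<le> real n powr a * S / (real n - t) ^ s"
      using num pos by (intro divide_right_mono) auto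
    also have "\<dots> \<le> real n powr a * S / (d * real n) ^ s"
      using den denpos S0 by (intro divide_left_mono mult_nonneg_nonneg) auto
    also have "\<dots> = S / d ^ s * real n powr a / real n ^ s"
      by (simp add: power_mult_distrib)
    finally show "norm (Aco (p # L) n) \<le> S / d ^ s * real n powr a / real n ^ fst p"
      by (simp add: s_def)
  qed
qed



lemma Aco_0: "L \<noteq> [] \<Longrightarrow> Aco L 0 = 0"
  by (cases L) auto

lemma pow_bound:
  assumes n1: "1 \<le> n" and K: "0 \<le> K"
  shows "K * real n powr a / real n ^ s * real n powr (-(a+e)) = K * real n powr (- real s - e)"
proof -
  have pos: "0 < real n" using n1 by simp
  have e1: "real n ^ s = real n powr real s" using pos by (simp add: powr_realpow)
  have "real n powr a / real n powr real s * real n powr (-(a+e)) = real n powr (a - real s + (-(a+e)))"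
    by (simp only: powr_diff powr_add)
  also have "a - real s + (-(a+e)) = - real s - e" by simp
  finally have *: "real n powr a / real n powr real s * real n powr (-(a+e)) = real n powr (- real s - e)" .
  have "K * real n powr a / real n ^ s * real n powr (-(a+e)) = K * (real n powr a / real n powr real s * real n powr (-(a+e)))"
    unfolding e1 by simp
  then show ?thesis unfolding * .
qed

lemma pow_bound2:
  assumes n1: "1 \<le> n"
  shows "K * real n powr a / real n ^ s = K * real n powr (a - real s)"
proof -
  have pos: "0 < real n" using n1 by simp
  have e1: "real n ^ s = real n powr real s" using pos by (simp add: powr_realpow)
  show ?thesis unfolding e1 powr_diff by simp
qed

lemma Aco_wsum: "cond L \<Longrightarrow> 0 < e \<Longrightarrow> summable (\<lambda>n. norm (Aco L n) * (real n + 1) powr (- (real (length L) * e)))"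
proof (induction L)
  case Nil
  have f: "(\<lambda>n. norm (Aco [] n) * (real n + 1) powr (- (real (length []) * e))) = (\<lambda>n. if n = 0 then 1 else 0)"
    by auto
  show ?case unfolding f using sums_single[of 0 "\<lambda>_. 1::real"] by (simp add: sums_summable)
next
  case (Cons p L)
  have cL: "cond L" using Cons.prems by simp
  define a where "a = real (length L) * e"
  have a0: "0 \<le> a" using Cons.prems by (simp add: a_def)
  have sm: "summable (\<lambda>n. norm (Aco L n) * (real n + 1) powr (-a))"
    using Cons.IH[OF cL Cons.prems(2)] by (simp add: a_def)
  obtain K where K0: "0 \<le> K" and K: "\<And>n. 1 \<le> n \<Longrightarrow> norm (Aco (p # L) n) \<le> K * real n powr a / real n ^ fst p"
    using Abound[OF Cons.prems(1) a0 sm] by blast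
  have s1: "1 \<le> fst p" using Cons.prems by simp
  have le: "\<bar>norm (Aco (p # L) n) * (real n + 1) powr (- (real (length (p # L)) * e))\<bar> \<le> K * real n powr (-1 - e)" for n
  proof (cases "n = 0")
    case True then show ?thesis by simp
  next
    case False
    then have n1: "1 \<le> n" by simp
    have ex: "real (length (p # L)) * e = a + e" by (simp add: a_def algebra_simps)
    have "(real n + 1) powr (-(a+e)) \<le> real n powr (-(a+e))"
      using n1 a0 Cons.prems(2) by (intro powr_mono2') auto
    moreover have "0 \<le> K * real n powr a / real n ^ fst p" using K0 by simp
    ultimately have "norm (Aco (p # L) n) * (real n + 1) powr (-(a+e)) \<le> K * real n powr a / real n ^ fst p * real n powr (-(a+e))"
      using K[OF n1] by (intro mult_mono) auto
    also have "\<dots> = K * real n powr (- real (fst p) - e)" by (rule pow_bound[OF n1 K0])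
    also have "\<dots> \<le> K * real n powr (-1 - e)"
      using n1 s1 K0 by (intro mult_left_mono powr_mono) auto
    finally show ?thesis unfolding ex by simp
  qed
  have "summable (\<lambda>n. K * real n powr (-1 - e))"
    using Cons.prems(2) by (intro summable_mult) (simp add: summable_real_powr_iff)
  then show ?case
    by (rule summable_comparison_test[rotated]) (use le in auto)
qed

lemma Aco_sum_top:
  assumes c: "cond (p # L)" and s2: "2 \<le> fst p"
  shows "summable (\<lambda>n. norm (Aco (p # L) n))"
proof -
  define e where "e = 1 / (real (length L) + 1)"
  define a where "a = real (length L) * e"
  have e0: "0 < e" by (simp add: e_def)
  have a0: "0 \<le> a" and a1: "a < 1" by (auto simp: a_def e_def field_simps)
  have cL: "cond L" using c by simp
  have sm: "summable (\<lambda>n. norm (Aco L n) * (real n + 1) powr (-a))"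
    using Aco_wsum[OF cL e0] by (simp add: a_def)
  obtain K where K0: "0 \<le> K" and K: "\<And>n. 1 \<le> n \<Longrightarrow> norm (Aco (p # L) n) \<le> K * real n powr a / real n ^ fst p"
    using Abound[OF c a0 sm] by blast
  have le: "\<bar>norm (Aco (p # L) n)\<bar> \<le> K * real n powr (a - 2)" for n
  proof (cases "n = 0")
    case True then show ?thesis by simp
  next
    case False
    then have n1: "1 \<le> n" by simp
    have "norm (Aco (p # L) n) \<le> K * real n powr a / real n ^ fst p"
      by (rule K[OF n1])
    also have "\<dots> = K * real n powr (a - real (fst p))" by (rule pow_bound2[OF n1])
    also have "\<dots> \<le> K * real n powr (a - 2)"
      using n1 s2 K0 a0 by (intro mult_left_mono powr_mono) auto
    finally show ?thesis by simp
  qed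
  have "summable (\<lambda>n. K * real n powr (a - 2))"
    using a1 by (intro summable_mult) (simp add: summable_real_powr_iff)
  then show ?thesis
    by (rule summable_comparison_test[rotated]) (use le in auto)
qed



lemma DP_Union: "DP k = (\<Union>n\<in>UNIV. DPh k n)" by (auto simp: DPh_def)
lemma DPh_disj: "disjoint_family_on (DPh k) UNIV"
  by (auto simp: disjoint_family_on_def DPh_def)

lemma infsum_DP:
  fixes g :: "nat list \<Rightarrow> complex"
  assumes sm: "summable (\<lambda>n. \<Sum>ns\<in>DPh k n. norm (g ns))"
  shows "infsum g (DP k) = (\<Sum>n. \<Sum>ns\<in>DPh k n. g ns)"
proof -
  have nn: "(\<lambda>ns. norm (g ns)) summable_on (\<Union>n\<in>UNIV. DPh k n)"
  proof (rule summable_on_UnionI[where g = "\<lambda>n. \<Sum>ns\<in>DPh k n. norm (g ns)"])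
    show "((\<lambda>ns. norm (g ns)) has_sum (\<Sum>ns\<in>DPh k n. norm (g ns))) (DPh k n)" for n
      by (rule has_sum_finite[OF DPh_finite])
    show "(\<lambda>n. \<Sum>ns\<in>DPh k n. norm (g ns)) summable_on UNIV"
      using sm by (subst summable_on_UNIV_nonneg_real_iff) (auto intro: sum_nonneg)
    show "disjoint_family_on (DPh k) UNIV" by (rule DPh_disj)
  qed simp
  have gs: "g summable_on (snd ` Sigma UNIV (DPh k))"
  proof -
    have "snd ` Sigma UNIV (DPh k) = (\<Union>n\<in>UNIV. DPh k n)" by force
    then show ?thesis using nn by (simp add: abs_summable_summable)
  qed
  have inj: "inj_on snd (Sigma UNIV (DPh k))"
    by (auto simp: inj_on_def DPh_def)
  have gs2: "(g \<circ> snd) summable_on Sigma UNIV (DPh k)"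
    using gs summable_on_reindex[OF inj, of g] by blast
  have "infsum g (DP k) = infsum g (snd ` Sigma UNIV (DPh k))"
    unfolding DP_Union by (rule arg_cong[where f = "infsum g"]) force
  also have "\<dots> = infsum (g \<circ> snd) (Sigma UNIV (DPh k))"
    by (rule infsum_reindex[OF inj])
  also have "\<dots> = infsum (\<lambda>n. infsum (\<lambda>ns. (g \<circ> snd) (n, ns)) (DPh k n)) UNIV"
    by (rule infsum_Sigma_banach[symmetric, OF gs2])
  also have "\<dots> = infsum (\<lambda>n. \<Sum>ns\<in>DPh k n. g ns) UNIV"
    by (simp add: DPh_finite)
  also have "\<dots> = (\<Sum>n. \<Sum>ns\<in>DPh k n. g ns)"
  proof (rule infsumI, rule norm_summable_imp_has_sum)
    have ns: "summable (\<lambda>n. norm (\<Sum>ns\<in>DPh k n. g ns))"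
    proof (rule summable_comparison_test[OF _ sm], intro exI allI impI)
      fix n show "norm (norm (\<Sum>ns\<in>DPh k n. g ns)) \<le> (\<Sum>ns\<in>DPh k n. norm (g ns))"
        by (simp add: norm_sum)
    qed
    show "summable (\<lambda>n. norm (\<Sum>ns\<in>DPh k n. g ns))" by (rule ns)
    show "(\<lambda>n. \<Sum>ns\<in>DPh k n. g ns) sums (\<Sum>n. \<Sum>ns\<in>DPh k n. g ns)"
      using summable_norm_cancel[OF ns] by (simp add: summable_sums)
  qed
  finally show ?thesis .
qed



definition nx :: "nat list \<Rightarrow> nat \<Rightarrow> nat" where
  "nx ns i = (if Suc i < length ns then ns ! Suc i else 0)"

lemma gco_index:
  "length ns = length L \<Longrightarrow> gco L ns = (\<Prod>i<length L. lP (snd (L ! i)) ^ (ns ! i - nx ns i)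
      / complex_of_real (real (ns ! i) - tt (drop i L)) ^ fst (L ! i))"
proof (induction L arbitrary: ns)
  case Nil then show ?case by simp
next
  case (Cons p L)
  obtain n ns' where nsx: "ns = n # ns'" and len: "length ns' = length L"
    using Cons.prems by (cases ns) auto
  have h: "nx (n # ns') 0 = hd0 ns'" by (cases ns') (auto simp: nx_def)
  have h2: "nx (n # ns') (Suc i) = nx ns' i" for i by (simp add: nx_def)
  show ?case
    unfolding nsx
    by (simp only: length_Cons prod.lessThan_Suc_shift gco.simps Cons.IH[OF len] h h2 nth_Cons_0 nth_Cons_Suc drop_0 drop_Suc_Cons)
qed

lemma telescope:
  fixes xi :: "complex list" and ns :: "nat list"
  assumes len: "length ns = length xi" and sorted: "sorted_wrt (>) ns" and k: "k \<le> length xi"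
  shows "(\<Prod>i<k. prod_list (take (Suc i) xi) ^ (ns ! i - nx ns i)) * prod_list (take k xi) ^ (if k < length xi then ns ! k else 0)
       = (\<Prod>i<k. xi ! i ^ (ns ! i))"
  using k
proof (induction k)
  case 0 then show ?case by simp
next
  case (Suc k)
  have kr: "k < length xi" using Suc.prems by simp
  have le: "nx ns k \<le> ns ! k"
  proof (cases "Suc k < length ns")
    case True
    then have "ns ! Suc k < ns ! k" using sorted_wrt_nth_less[OF sorted, of k "Suc k"] by simp
    then show ?thesis using True by (simp add: nx_def)
  next
    case False then show ?thesis by (simp add: nx_def)
  qed
  have nxe: "(if Suc k < length xi then ns ! Suc k else 0) = nx ns k" using len by (simp add: nx_def)
  have tk: "prod_list (take (Suc k) xi) = prod_list (take k xi) * xi ! k"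
    using kr by (simp add: take_Suc_conv_app_nth)
  have "(\<Prod>i<Suc k. prod_list (take (Suc i) xi) ^ (ns ! i - nx ns i)) * prod_list (take (Suc k) xi) ^ (if Suc k < length xi then ns ! Suc k else 0)
      = (\<Prod>i<k. prod_list (take (Suc i) xi) ^ (ns ! i - nx ns i)) * (prod_list (take (Suc k) xi) ^ (ns ! k - nx ns k) * prod_list (take (Suc k) xi) ^ nx ns k)"
    unfolding nxe by (simp add: mult.assoc)
  also have "prod_list (take (Suc k) xi) ^ (ns ! k - nx ns k) * prod_list (take (Suc k) xi) ^ nx ns k = prod_list (take (Suc k) xi) ^ ns ! k"
    using le by (simp add: power_add[symmetric])
  also have "\<dots> = prod_list (take k xi) ^ (if k < length xi then ns ! k else 0) * xi ! k ^ ns ! k"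
    using kr by (simp add: tk power_mult_distrib)
  also have "(\<Prod>i<k. prod_list (take (Suc i) xi) ^ (ns ! i - nx ns i)) * (prod_list (take k xi) ^ (if k < length xi then ns ! k else 0) * xi ! k ^ ns ! k)
      = (\<Prod>i<k. xi ! i ^ (ns ! i)) * xi ! k ^ ns ! k"
    using Suc.IH kr by (simp add: mult.assoc[symmetric])
  also have "\<dots> = (\<Prod>i<Suc k. xi ! i ^ (ns ! i))" by simp
  finally show ?case .
qed

lemma telescope_full:
  fixes xi :: "complex list" and ns :: "nat list"
  assumes len: "length ns = length xi" and sorted: "sorted_wrt (>) ns"
  shows "(\<Prod>i<length xi. prod_list (take (Suc i) xi) ^ (ns ! i - nx ns i)) = (\<Prod>i<length xi. xi ! i ^ (ns ! i))"
  using telescope[OF len sorted order.refl] by simp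



lemma wordL_map: "wordL (map (\<lambda>i. (a i, b i)) xs) = concat (map (\<lambda>i. replicate (a i - 1) X0 @ [b i]) xs)"
  by (induction xs) auto

lemma tt_suffix:
  assumes lt: "length t = r"
  shows "i < r \<Longrightarrow> tt (map (\<lambda>i. (s ! i, XL (Suc i) xi (tbar t i))) [i..<r]) = t ! i"
proof (induction "r - i" arbitrary: i)
  case 0 then show ?case by simp
next
  case (Suc d)
  have u: "[i..<r] = i # [Suc i..<r]" using Suc.prems by (simp add: upt_conv_Cons)
  show ?case
  proof (cases "Suc i < r")
    case True
    have "tt (map (\<lambda>i. (s ! i, XL (Suc i) xi (tbar t i))) [Suc i..<r]) = t ! Suc i"
      using Suc.hyps(1)[of "Suc i"] Suc.hyps(2) True by simp
    then show ?thesis unfolding u using True lt by (simp add: tbar_def)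
  next
    case False
    then have "Suc i = r" using Suc.prems by simp
    then show ?thesis unfolding u using lt by (simp add: tbar_def)
  qed
qed

lemma cond_suffix:
  assumes lt: "length t = r" and ls: "length s = r" and lx: "length xi = r"
    and s1: "\<forall>k\<in>set s. k \<ge> 1" and E: "condE xi t"
  shows "i \<le> r \<Longrightarrow> cond (map (\<lambda>i. (s ! i, XL (Suc i) xi (tbar t i))) [i..<r])"
proof (induction "r - i" arbitrary: i)
  case 0 then show ?case by simp
next
  case (Suc d)
  then have ir: "i < r" by simp
  have u: "[i..<r] = i # [Suc i..<r]" using ir by (simp add: upt_conv_Cons)
  have rest: "cond (map (\<lambda>i. (s ! i, XL (Suc i) xi (tbar t i))) [Suc i..<r])"
    using Suc.hyps(1)[of "Suc i"] Suc.hyps(2) ir by simp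
  have si: "1 \<le> s ! i" using s1 ir ls by (simp add: nth_mem)
  have Ei: "norm (prod_list (take (Suc i) xi)) \<le> 1 \<and> t ! i < 1"
    using E ir lx unfolding condE_def by (metis Suc_leI atLeastAtMost_iff diff_Suc_1 le_add1 plus_1_eq_Suc)
  have tti: "tt (map (\<lambda>i. (s ! i, XL (Suc i) xi (tbar t i))) [i..<r]) = t ! i"
    by (rule tt_suffix[OF lt ir])
  show ?case
    using rest si Ei tti unfolding u by simp
qed



theorem mainTheorem7:
  fixes s :: "nat list" and xi :: "complex list" and t :: "real list" and r :: nat
  assumes "r \<ge> 1"
    and "length s = r" and "length xi = r" and "length t = r"
    and "\<forall>k\<in>set s. k \<ge> 1"
    and "s!0 > 1"
    and "condE xi t"
  shows "Di xi t s = alpha0 (colored_word s xi t) 1"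
proof -
  note r1 = assms(1) and ls = assms(2) and lx = assms(3) and lt = assms(4)
    and s1 = assms(5) and s0 = assms(6) and E = assms(7)
  define f where "f = (\<lambda>i. (s ! i, XL (Suc i) xi (tbar t i)))"
  define Lt where "Lt = map f [0..<r]"
  define L1 where "L1 = map f [1..<r]"
  have LtC: "Lt = f 0 # L1" using r1 by (simp add: Lt_def L1_def upt_conv_Cons)
  have lenLt: "length Lt = r" by (simp add: Lt_def)
  have cw: "colored_word s xi t = wordL Lt"
    unfolding colored_word_def Lt_def f_def ls wordL_map ..
  have cLt: "cond Lt"
    using cond_suffix[OF lt ls lx s1 E, of 0] unfolding Lt_def f_def by simp
  have fs2: "2 \<le> fst (f 0)" using s0 by (simp add: f_def)
  have sumtop: "summable (\<lambda>n. norm (Aco Lt n))"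
    using Aco_sum_top[of "f 0" L1] cLt fs2 LtC by simp
  have alpha: "alpha0 (wordL Lt) 1 = (\<Sum>n. Aco Lt n)"
    using top_main[of "f 0" L1] cLt fs2 sumtop LtC by simp
  have nthLt: "Lt ! i = f i" if "i < r" for i using that by (simp add: Lt_def)
  have ttLt: "tt (drop i Lt) = t ! i" if "i < r" for i
    using tt_suffix[OF lt that, of s xi] that by (simp add: Lt_def drop_map f_def)
  have termeq: "(\<Prod>i<length s. xi ! i ^ (ns ! i) / complex_of_real (real (ns ! i) - t ! i) ^ (s ! i)) = gco Lt ns"
    if ns: "ns \<in> DP r" for ns
  proof -
    have lns: "length ns = r" and sns: "sorted_wrt (>) ns" using ns by (auto simp: DP_def)
    have "gco Lt ns = (\<Prod>i<r. prod_list (take (Suc i) xi) ^ (ns ! i - nx ns i)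
         / complex_of_real (real (ns ! i) - t ! i) ^ (s ! i))"
      unfolding gco_index[OF lns[folded lenLt]] lenLt
      by (rule prod.cong) (auto simp: nthLt ttLt f_def)
    also have "\<dots> = (\<Prod>i<r. prod_list (take (Suc i) xi) ^ (ns ! i - nx ns i))
         / (\<Prod>i<r. complex_of_real (real (ns ! i) - t ! i) ^ (s ! i))"
      by (rule prod_dividef)
    also have "(\<Prod>i<r. prod_list (take (Suc i) xi) ^ (ns ! i - nx ns i)) = (\<Prod>i<r. xi ! i ^ (ns ! i))"
      using telescope_full[of ns xi] lns lx sns by simp
    also have "(\<Prod>i<r. xi ! i ^ (ns ! i)) / (\<Prod>i<r. complex_of_real (real (ns ! i) - t ! i) ^ (s ! i))
         = (\<Prod>i<r. xi ! i ^ (ns ! i) / complex_of_real (real (ns ! i) - t ! i) ^ (s ! i))"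
      by (rule prod_dividef[symmetric])
    finally show ?thesis using ls by simp
  qed
  have "Di xi t s = infsum (gco Lt) (DP r)"
    unfolding Di_def ls[symmetric] DP_def[symmetric]
    by (rule infsum_cong) (use termeq ls in simp)
  also have "\<dots> = (\<Sum>n. \<Sum>ns\<in>DPh r n. gco Lt ns)"
  proof (rule infsum_DP)
    have cA: "cond (absL Lt)" by (rule cond_absL[OF cLt])
    have "summable (\<lambda>n. norm (Aco (absL Lt) n))"
      using Aco_sum_top[of "(fst (f 0), XL 1 [complex_of_real (norm (lP (snd (f 0))))] (lT (snd (f 0))))" "absL L1"]
        cA fs2 LtC by simp
    then show "summable (\<lambda>n. \<Sum>ns\<in>DPh r n. norm (gco Lt ns))"
      using normAco_abs[OF cLt] lenLt by simp
  qed
  also have "\<dots> = (\<Sum>n. Aco Lt n)"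
    using Aco_gco[of Lt] lenLt by simp
  finally show ?thesis using alpha cw by simp
qed


end
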